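(* Let the mesh, coefficients $a^{(n)}_{n-k}$ and consistency errors $R^n$ be as in the context (in particular $\tau_{n-1}\le\tau_n$), and let $v\in C([0,T])\cap C^2((0,T])$ with $\int_0^T t|v''(t)|\,dt<\infty$. Put $G^k=\int_{t_{k-3/2}}^{t_{k-1/2}}(t-t_{k-3/2})|v''(t)|\,dt$. Then for every $1\le j\le N$, $$|R^j|\le\sum_{k=1}^{j-1}\big(a^{(j)}_{j-k-1}-a^{(j)}_{j-k}\big)G^k+a^{(j)}_0G^j .$$
   Context: Fix $T>0$, $0<\alpha<1$ and a mesh $0=t_0<t_1<\dots<t_N=T$ with step sizes $\tau_n=t_n-t_{n-1}$ satisfying $\tau_{n-1}\le\tau_n$ for $2\le n\le N$. Set $t_{-1/2}=t_0$, $t_{n-1/2}=t_{n-1}+\tau_n/2$ for $1\le n\le N$, $\tau_{1/2}=\tau_1/2$ and $\tau_{n-1/2}=(\tau_n+\tau_{n-1})/2$ for $n\ge 2$. Let $\omega_\gamma(t)=t^{\gamma-1}/\Gamma(\gamma)$ for $t>0$. For $1\le n\le N$ and $1\le k\le n$ define $$a^{(n)}_{n-k}=\frac{1}{\tau_{k-1/2}}\int_{t_{k-3/2}}^{t_{k-1/2}}\omega_{1-\alpha}(t_{n-1/2}-s)\,ds .$$ The Caputo derivative of order $\alpha$ is ${}^C_0D^\alpha_t v(t)=\int_0^t\omega_{1-\alpha}(t-s)v'(s)\,ds$. The local consistency error of the nonuniform $L1$-type formula at $t_{n-1/2}$ is $$R^n={}^C_0D^\alpha_t v(t_{n-1/2})-\sum_{k=1}^n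 a^{(n)}_{n-k}\big(v(t_{k-1/2})-v(t_{k-3/2})\big),\qquad 1\le n\le N.$$ *)

theory Defs
  imports "HOL-Analysis.Analysis"
begin

definition omega :: "real \<Rightarrow> real \<Rightarrow> real" where
  "omega \<gamma> s = s powr (\<gamma> - 1) / Gamma \<gamma>"

definition tau :: "(nat \<Rightarrow> real) \<Rightarrow> nat \<Rightarrow> real" where
  "tau t n = t n - t (n - 1)"

text \<open>tmid t n is t_(n-1/2); tmid t 0 = t_(-1/2) = t_0.\<close>
definition tmid :: "(nat \<Rightarrow> real) \<Rightarrow> nat \<Rightarrow> real" where
  "tmid t n = (if n = 0 then t 0 else t (n - 1) + tau t n / 2)"

text \<open>tauh t k is tau_(k-1/2).\<close>
definition tauh :: "(nat \<Rightarrow> real) \<Rightarrow> nat \<Rightarrow> real" where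
  "tauh t k = (if k = 1 then tau t 1 / 2 else (tau t k + tau t (k - 1)) / 2)"

text \<open>acoef t \<alpha> n k is a^(n)_(n-k).\<close>
definition acoef :: "(nat \<Rightarrow> real) \<Rightarrow> real \<Rightarrow> nat \<Rightarrow> nat \<Rightarrow> real" where
  "acoef t \<alpha> n k = (1 / tauh t k) *
     integral {tmid t (k - 1)..tmid t k} (\<lambda>s. omega (1 - \<alpha>) (tmid t n - s))"

definition caputo :: "real \<Rightarrow> (real \<Rightarrow> real) \<Rightarrow> real \<Rightarrow> real" where
  "caputo \<alpha> v s = integral {0..s} (\<lambda>r. omega (1 - \<alpha>) (s - r) * deriv v r)"

definition Rerr :: "(nat \<Rightarrow> real) \<Rightarrow> real \<Rightarrow> (real \<Rightarrow> real) \<Rightarrow> nat \<Rightarrow> real" where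
  "Rerr t \<alpha> v n = caputo \<alpha> v (tmid t n)
     - (\<Sum>k=1..n. acoef t \<alpha> n k * (v (tmid t k) - v (tmid t (k - 1))))"

end

theory Submission
  imports Defs
begin


definition PP :: "real \<Rightarrow> real \<Rightarrow> real \<Rightarrow> real" where
  "PP \<alpha> x s = - ((x - s) powr (1 - \<alpha>)) / Gamma (2 - \<alpha>)"

lemma omega_eq: "omega (1-(\<alpha>::real)) y = y powr (-\<alpha>) / Gamma (1-\<alpha>)"
  by (simp add: omega_def)

lemma Gamma2: assumes "(\<alpha>::real) < 1" shows "Gamma (2-\<alpha>) = (1-\<alpha>) * Gamma (1-\<alpha>)"
proof -
  have "(1-\<alpha>) \<notin> \<int>\<^sub>\<le>\<^sub>0"
  proof
    assume "1-\<alpha> \<in> \<int>\<^sub>\<le>\<^sub>0"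
    then have "1-\<alpha> \<le> 0" by (rule nonpos_Ints_nonpos)
    with assms show False by simp
  qed
  from Gamma_plus1[OF this] show ?thesis by (simp add: algebra_simps)
qed

lemma PP_deriv:
  assumes "(\<alpha>::real) < 1" "s < x"
  shows "(PP \<alpha> x has_real_derivative omega (1-\<alpha>) (x - s)) (at s)"
proof -
  have g0: "Gamma (2-\<alpha>) > 0" by (rule Gamma_real_pos) (use assms in simp)
  have g1: "Gamma (1-\<alpha>) > 0" by (rule Gamma_real_pos) (use assms in simp)
  have g: "Gamma (1-\<alpha>) > 0" "Gamma (2-\<alpha>) \<noteq> 0" using g1 g0 by linarith+
  have "((\<lambda>s. - ((x - s) powr (1 - \<alpha>)) / Gamma (2 - \<alpha>)) has_real_derivative
     (- ((1-\<alpha>) * (x - s) powr (1 - \<alpha> - 1) * (-1))) / Gamma (2 - \<alpha>)) (at s)"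
    using assms g by (auto intro!: derivative_eq_intros)
  moreover have "(- ((1-\<alpha>) * (x - s) powr (1 - \<alpha> - 1) * (-1))) / Gamma (2 - \<alpha>) = omega (1-\<alpha>) (x - s)"
    using assms g by (simp add: Gamma2 omega_eq field_simps)
  ultimately show ?thesis unfolding PP_def by simp
qed

lemma PP_cont:
  assumes "(\<alpha>::real) < 1" "S \<subseteq> {..x}"
  shows "continuous_on S (PP \<alpha> x)"
proof -
  have g0: "Gamma (2-\<alpha>) > 0" by (rule Gamma_real_pos) (use assms in simp)
  then have "Gamma (2-\<alpha>) \<noteq> 0" by simp
  then show ?thesis unfolding PP_def using assms
  by (intro continuous_on_divide continuous_on_minus continuous_on_powr' continuous_intros) auto
qed

lemma K_mono:
  assumes "0 < (\<alpha>::real)" "\<alpha> < 1" "s1 \<le> s2" "s2 < x"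
  shows "omega (1-\<alpha>) (x - s1) \<le> omega (1-\<alpha>) (x - s2)"
  unfolding omega_eq using assms
  by (intro divide_right_mono powr_mono2') auto

lemma K_pos:
  assumes "(\<alpha>::real) < 1" "s < x"
  shows "0 < omega (1-\<alpha>) (x - s)"
  unfolding omega_eq using assms by simp

lemma PP_integral:
  assumes "(\<alpha>::real) < 1" "l \<le> r" "r \<le> x"
  shows "((\<lambda>s. omega (1-\<alpha>) (x - s)) has_integral (PP \<alpha> x r - PP \<alpha> x l)) {l..r}"
  using assms
  by (intro fundamental_theorem_of_calculus_interior PP_cont)
     (auto simp: has_real_derivative_iff_has_vector_derivative[symmetric] intro!: PP_deriv)

lemma PP_mvt:
  assumes "(\<alpha>::real) < 1" "l < u" "u \<le> x"
  shows "\<exists>\<xi>. l < \<xi> \<and> \<xi> < u \<and> PP \<alpha> x u - PP \<alpha> x l = (u - l) * omega (1-\<alpha>) (x - \<xi>)"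
proof -
  have c: "continuous_on {l..u} (PP \<alpha> x)" using assms by (intro PP_cont) auto
  have d: "PP \<alpha> x differentiable (at z)" if "l < z" "z < u" for z
    using PP_deriv[OF assms(1), of z x] that assms unfolding real_differentiable_def by auto
  obtain L z where z: "l < z" "z < u" "(PP \<alpha> x has_real_derivative L) (at z)" "PP \<alpha> x u - PP \<alpha> x l = (u - l) * L"
    using MVT[OF assms(2) c d] by blast
  have "L = omega (1-\<alpha>) (x - z)"
    using DERIV_unique[OF z(3) PP_deriv[OF assms(1), of z x]] z assms by auto
  then show ?thesis using z by blast
qed


lemma powr_neg_convex:
  assumes "0 < (\<alpha>::real)"
  shows "convex_on {0<..} (\<lambda>y::real. y powr (-\<alpha>))"
proof (rule convex_on_realI[where f' = "\<lambda>y. -\<alpha> * y powr (-\<alpha>-1)"])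
  show "connected {0::real<..}" by simp
next
  fix y :: real assume "y \<in> {0<..}"
  then show "((\<lambda>y. y powr (-\<alpha>)) has_real_derivative -\<alpha> * y powr (-\<alpha>-1)) (at y)"
    using has_real_derivative_powr[of y "-\<alpha>"] by simp
next
  fix y z :: real assume "y \<in> {0<..}" "z \<in> {0<..}" "y \<le> z"
  then have "z powr (-\<alpha>-1) \<le> y powr (-\<alpha>-1)" using assms by (intro powr_mono2') auto
  then show "-\<alpha> * y powr (-\<alpha>-1) \<le> -\<alpha> * z powr (-\<alpha>-1)" using assms by simp
qed

lemma K_conv:
  assumes "0 < (\<alpha>::real)" "\<alpha> < 1" "l \<le> u" "u - l \<le> h" "u + h < x"
  shows "2 * omega (1-\<alpha>) (x - u) \<le> omega (1-\<alpha>) (x - (u+h)) + omega (1-\<alpha>) (x - l)"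
proof -
  define a where "a = x - (u+h)"
  define b where "b = x - u"
  define c where "c = x - l"
  define d where "d = 2*b - c"
  have pos: "0 < a" "a \<le> d" "0 < c" using assms by (auto simp: a_def b_def c_def d_def)
  have 1: "d powr (-\<alpha>) \<le> a powr (-\<alpha>)" using pos assms by (intro powr_mono2') auto
  have "b powr (-\<alpha>) \<le> (1 - 1/2) * d powr (-\<alpha>) + (1/2) * c powr (-\<alpha>)"
  proof -
    have "(1 - 1/2) *\<^sub>R d + (1/2::real) *\<^sub>R c = b" by (simp add: d_def field_simps)
    moreover have "(\<lambda>y::real. y powr (-\<alpha>)) ((1 - 1/2) *\<^sub>R d + (1/2::real) *\<^sub>R c)
       \<le> (1 - 1/2) * d powr (-\<alpha>) + (1/2) * c powr (-\<alpha>)"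
      by (rule convex_onD[OF powr_neg_convex[OF assms(1)]]) (use pos in auto)
    ultimately show ?thesis by simp
  qed
  with 1 have "2 * b powr (-\<alpha>) \<le> a powr (-\<alpha>) + c powr (-\<alpha>)" by simp
  moreover have "Gamma (1-\<alpha>) > 0" by (rule Gamma_real_pos) (use assms in simp)
  ultimately show ?thesis unfolding omega_eq a_def b_def c_def
    by (simp add: add_divide_distrib[symmetric] divide_right_mono)
qed

lemma three_slopes:
  assumes "0 < (\<alpha>::real)" "\<alpha> < 1" "l < u" "u < r" "r \<le> x"
  shows "(PP \<alpha> x u - PP \<alpha> x l) / (u - l) \<le> (PP \<alpha> x r - PP \<alpha> x u) / (r - u)"
proof -
  obtain \<xi> where \<xi>: "l < \<xi>" "\<xi> < u" "PP \<alpha> x u - PP \<alpha> x l = (u - l) * omega (1-\<alpha>) (x - \<xi>)"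
    using PP_mvt[OF assms(2,3), of x] assms by auto
  obtain \<eta> where \<eta>: "u < \<eta>" "\<eta> < r" "PP \<alpha> x r - PP \<alpha> x u = (r - u) * omega (1-\<alpha>) (x - \<eta>)"
    using PP_mvt[OF assms(2,4,5)] by auto
  have "omega (1-\<alpha>) (x - \<xi>) \<le> omega (1-\<alpha>) (x - \<eta>)"
    using \<xi> \<eta> assms by (intro K_mono) auto
  then show ?thesis using \<xi> \<eta> assms by simp
qed

lemma slope_mono:
  assumes "0 < (\<alpha>::real)" "\<alpha> < 1" "l < u" "u \<le> r" "r \<le> x"
  shows "(PP \<alpha> x u - PP \<alpha> x l) / (u - l) \<le> (PP \<alpha> x r - PP \<alpha> x l) / (r - l)"
proof (cases "u = r")
  case False
  then have ur: "u < r" using assms by simp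
  define A where "A = PP \<alpha> x u - PP \<alpha> x l"
  define B where "B = PP \<alpha> x r - PP \<alpha> x u"
  have "A / (u - l) \<le> B / (r - u)" using three_slopes[OF assms(1,2,3) ur assms(5)] by (simp add: A_def B_def)
  then have "A * (r - u) \<le> B * (u - l)" using ur assms by (simp add: field_simps)
  then have "A * (r - l) \<le> (A + B) * (u - l)" by (simp add: algebra_simps)
  then have "A / (u - l) \<le> (A + B) / (r - l)" using ur assms by (simp add: field_simps)
  then show ?thesis by (simp add: A_def B_def)
qed simp

lemma K_le_slope:
  assumes "0 < (\<alpha>::real)" "\<alpha> < 1" "l < u" "u \<le> x"
  shows "omega (1-\<alpha>) (x - l) \<le> (PP \<alpha> x u - PP \<alpha> x l) / (u - l)"
proof -
  obtain \<xi> where \<xi>: "l < \<xi>" "\<xi> < u" "PP \<alpha> x u - PP \<alpha> x l = (u - l) * omega (1-\<alpha>) (x - \<xi>)"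
    using PP_mvt[OF assms(2,3,4)] by auto
  have "omega (1-\<alpha>) (x - l) \<le> omega (1-\<alpha>) (x - \<xi>)"
    using \<xi> assms by (intro K_mono) auto
  then show ?thesis using \<xi> assms by simp
qed

lemma phi_ineq:
  assumes "0 < (\<alpha>::real)" "\<alpha> < 1" "l < r" "h = r - l" "r + h \<le> x"
  shows "0 \<le> PP \<alpha> x (r+h) - PP \<alpha> x r - 2 * (PP \<alpha> x r - PP \<alpha> x l) + h * omega (1-\<alpha>) (x - l)"
proof -
  define \<phi> where "\<phi> u = PP \<alpha> (x-h) u - PP \<alpha> (x-h) l - 2 * (PP \<alpha> x u - PP \<alpha> x l) + (u - l) * omega (1-\<alpha>) (x - l)" for u
  have shift: "PP \<alpha> (x-h) u = PP \<alpha> x (u+h)" for u by (simp add: PP_def algebra_simps)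
  have cont: "continuous_on {l..r} \<phi>" unfolding \<phi>_def
    using assms by (intro continuous_intros PP_cont) auto
  have der: "(\<phi> has_real_derivative (omega (1-\<alpha>) ((x-h) - z) - 2 * omega (1-\<alpha>) (x - z) + omega (1-\<alpha>) (x - l))) (at z)"
    if "l < z" "z < r" for z
    unfolding \<phi>_def using that assms
    by (auto intro!: derivative_eq_intros PP_deriv)
  have dif: "\<phi> differentiable (at z)" if "l < z" "z < r" for z
    using der[OF that] unfolding real_differentiable_def by auto
  obtain L z where z: "l < z" "z < r" "(\<phi> has_real_derivative L) (at z)" "\<phi> r - \<phi> l = (r - l) * L"
    using MVT[OF assms(3) cont dif] by blast
  have L: "L = omega (1-\<alpha>) ((x-h) - z) - 2 * omega (1-\<alpha>) (x - z) + omega (1-\<alpha>) (x - l)"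
    using DERIV_unique[OF z(3) der[OF z(1,2)]] .
  have "2 * omega (1-\<alpha>) (x - z) \<le> omega (1-\<alpha>) (x - (z+h)) + omega (1-\<alpha>) (x - l)"
    using z assms by (intro K_conv) auto
  then have "0 \<le> L" unfolding L by (simp add: algebra_simps)
  then have "0 \<le> \<phi> r" using z assms by (simp add: \<phi>_def)
  moreover have "\<phi> r = PP \<alpha> x (r+h) - PP \<alpha> x r - 2 * (PP \<alpha> x r - PP \<alpha> x l) + h * omega (1-\<alpha>) (x - l)"
    unfolding \<phi>_def shift using assms(4) by simp
  ultimately show ?thesis by simp
qed


lemma I3:
  assumes "0 < (\<alpha>::real)" "\<alpha> < 1" "l < r" "h = r - l" "h \<le> h'" "r + h' \<le> x"
  shows "2 * ((PP \<alpha> x r - PP \<alpha> x l) / h) - omega (1-\<alpha>) (x - l) \<le> (PP \<alpha> x (r+h') - PP \<alpha> x r) / h'"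
proof -
  have h: "0 < h" using assms by simp
  have "0 \<le> PP \<alpha> x (r+h) - PP \<alpha> x r - 2 * (PP \<alpha> x r - PP \<alpha> x l) + h * omega (1-\<alpha>) (x - l)"
    using assms by (intro phi_ineq) auto
  then have "2 * (PP \<alpha> x r - PP \<alpha> x l) - h * omega (1-\<alpha>) (x - l) \<le> PP \<alpha> x (r+h) - PP \<alpha> x r"
    by linarith
  then have "(2 * (PP \<alpha> x r - PP \<alpha> x l) - h * omega (1-\<alpha>) (x - l)) / h \<le> (PP \<alpha> x (r+h) - PP \<alpha> x r) / h"
    using h by (intro divide_right_mono) auto
  then have 1: "2 * ((PP \<alpha> x r - PP \<alpha> x l) / h) - omega (1-\<alpha>) (x - l) \<le> (PP \<alpha> x (r+h) - PP \<alpha> x r) / h"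
    using h by (simp add: diff_divide_distrib)
  have "(PP \<alpha> x (r+h) - PP \<alpha> x r) / (r + h - r) \<le> (PP \<alpha> x (r+h') - PP \<alpha> x r) / (r + h' - r)"
    using assms h by (intro slope_mono) auto
  with 1 show ?thesis by simp
qed

lemma W_bound:
  assumes "0 < (\<alpha>::real)" "\<alpha> < 1" "l < r" "r \<le> x"
    and "a = (PP \<alpha> x r - PP \<alpha> x l) / (r - l)" "a - omega (1-\<alpha>) (x - l) \<le> c"
    and "l \<le> u" "u \<le> r"
  shows "\<bar>PP \<alpha> x u - PP \<alpha> x l - a * (u - l)\<bar> \<le> c * (u - l)"
proof (cases "u = l")
  case False
  then have ul: "l < u" using assms by simp
  have 1: "(PP \<alpha> x u - PP \<alpha> x l) / (u - l) \<le> a"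
    using slope_mono[OF assms(1,2) ul assms(8,4)] assms(5) by simp
  have 2: "omega (1-\<alpha>) (x - l) \<le> (PP \<alpha> x u - PP \<alpha> x l) / (u - l)"
    using K_le_slope[OF assms(1,2) ul] assms by simp
  from 1 ul have "PP \<alpha> x u - PP \<alpha> x l \<le> a * (u - l)" by (simp add: field_simps)
  moreover from 2 assms(6) have "a - c \<le> (PP \<alpha> x u - PP \<alpha> x l) / (u - l)" by simp
  then have "(a - c) * (u - l) \<le> PP \<alpha> x u - PP \<alpha> x l" using ul by (simp add: field_simps)
  ultimately show ?thesis by (simp add: algebra_simps)
qed simp



locale vset =
  fixes T :: real and v v' v'' :: "real \<Rightarrow> real"
  assumes T_pos: "0 < T"
    and v_cont: "continuous_on {0..T} v"
    and v1: "\<And>s. s \<in> {0<..T} \<Longrightarrow> (v has_real_derivative v' s) (at s within {0..T})"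
    and v2: "\<And>s. s \<in> {0<..T} \<Longrightarrow> (v' has_real_derivative v'' s) (at s within {0..T})"
    and v2_cont: "continuous_on {0<..T} v''"
    and v2_int: "(\<lambda>s. s * \<bar>v'' s\<bar>) integrable_on {0..T}"
begin

lemma v1_at: "0 < s \<Longrightarrow> s < T \<Longrightarrow> (v has_real_derivative v' s) (at s)"
  using v1[of s] at_within_Icc_at[of 0 s T] by auto

lemma v2_at: "0 < s \<Longrightarrow> s < T \<Longrightarrow> (v' has_real_derivative v'' s) (at s)"
  using v2[of s] at_within_Icc_at[of 0 s T] by auto

lemma v'_cont_within: "0 < s \<Longrightarrow> s \<le> T \<Longrightarrow> continuous (at s within {0..T}) v'"
  using v2[of s] DERIV_continuous by auto

lemma v'_cont_on: "0 < a \<Longrightarrow> b \<le> T \<Longrightarrow> continuous_on {a..b} v'"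
  unfolding continuous_on_eq_continuous_within
  using v'_cont_within continuous_within_subset
  by (metis atLeastAtMost_iff atLeastatMost_subset_iff dual_order.trans less_le_not_le order.refl)

lemma v''_cont_on: "0 < a \<Longrightarrow> b \<le> T \<Longrightarrow> continuous_on {a..b} v''"
  by (rule continuous_on_subset[OF v2_cont]) auto

lemma v'_ftc: "0 < s \<Longrightarrow> s \<le> b \<Longrightarrow> b \<le> T \<Longrightarrow> (v'' has_integral (v' b - v' s)) {s..b}"
  by (intro fundamental_theorem_of_calculus)
     (auto simp: has_real_derivative_iff_has_vector_derivative[symmetric] intro!: has_field_derivative_subset[OF v2])

lemma v_ftc: "0 \<le> l \<Longrightarrow> l \<le> r \<Longrightarrow> r < T \<Longrightarrow> (v' has_integral (v r - v l)) {l..r}"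
  by (intro fundamental_theorem_of_calculus_interior continuous_on_subset[OF v_cont])
     (auto simp: has_real_derivative_iff_has_vector_derivative[symmetric] intro!: v1_at)

lemma G_int: "0 \<le> l \<Longrightarrow> l \<le> r \<Longrightarrow> r \<le> T \<Longrightarrow> (\<lambda>s. (s - l) * \<bar>v'' s\<bar>) integrable_on {l..r}"
proof (cases "l = 0")
  case True
  assume "l \<le> r" "r \<le> T"
  have "(\<lambda>s. s * \<bar>v'' s\<bar>) integrable_on {0..r}"
    by (rule integrable_on_subinterval[OF v2_int]) (use \<open>r \<le> T\<close> in auto)
  then show ?thesis using True by simp
next
  case False
  assume "0 \<le> l" "l \<le> r" "r \<le> T"
  then show ?thesis using False
    by (intro integrable_continuous_interval continuous_intros v''_cont_on) auto
qed

lemma sv'_lim: "((\<lambda>s. s * v' s) \<longlongrightarrow> 0) (at_right 0)"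
proof (rule tendstoI)
  fix e :: real assume e: "0 < e"
  define g where "g y = integral {0..y} (\<lambda>s. s * \<bar>v'' s\<bar>)" for y
  have gc: "continuous_on {0..T} g" unfolding g_def by (rule indefinite_integral_continuous_1[OF v2_int])
  have g0: "g 0 = 0" by (simp add: g_def)
  from gc have "continuous (at 0 within {0..T}) g" using T_pos by (simp add: continuous_on_eq_continuous_within)
  then obtain \<eta> where \<eta>: "\<eta> > 0" "\<forall>y\<in>{0..T}. dist y 0 < \<eta> \<longrightarrow> dist (g y) (g 0) < e/2"
    unfolding continuous_within_eps_delta using e by (meson half_gt_zero)
  define \<eta>0 where "\<eta>0 = min (\<eta>/2) T"
  have \<eta>0: "0 < \<eta>0" "\<eta>0 \<le> T" using \<eta> T_pos by (auto simp: \<eta>0_def)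
  have "dist \<eta>0 0 < \<eta>" "\<eta>0 \<in> {0..T}" using \<eta> \<eta>0 by (auto simp: \<eta>0_def dist_real_def)
  then have "dist (g \<eta>0) (g 0) < e/2" using \<eta>(2) by blast
  then have g\<eta>: "g \<eta>0 < e/2" using g0 by (simp add: dist_real_def)
  define M where "M = \<bar>v' \<eta>0\<bar>"
  define b where "b = min \<eta>0 (e / (2*(M+1)))"
  have M: "M \<ge> 0" by (simp add: M_def)
  have b: "b > 0" using \<eta>0 e M by (auto simp: b_def)
  show "eventually (\<lambda>s. dist (s * v' s) 0 < e) (at_right 0)"
    unfolding eventually_at_right_field
  proof (intro exI[of _ b] conjI allI impI)
    show "b > 0" by (fact b)
    fix s :: real assume s: "0 < s" "s < b"
    have s\<eta>: "s \<le> \<eta>0" using s by (simp add: b_def)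
    have ftc: "(v'' has_integral (v' \<eta>0 - v' s)) {s..\<eta>0}" using v'_ftc s s\<eta> \<eta>0 by auto
    have vs: "v' s = v' \<eta>0 - integral {s..\<eta>0} v''" using integral_unique[OF ftc] by simp
    have int1: "v'' integrable_on {s..\<eta>0}" using ftc by blast
    have int2: "(\<lambda>u. \<bar>v'' u\<bar>) integrable_on {s..\<eta>0}"
      using s \<eta>0 by (intro integrable_continuous_interval continuous_intros v''_cont_on) auto
    have int3: "(\<lambda>u. u * \<bar>v'' u\<bar>) integrable_on {s..\<eta>0}"
      using s \<eta>0 by (intro integrable_continuous_interval continuous_intros v''_cont_on) auto
    have int4: "(\<lambda>u. u * \<bar>v'' u\<bar>) integrable_on {0..\<eta>0}"
      using \<eta>0 by (intro integrable_on_subinterval[OF v2_int]) auto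
    have "\<bar>integral {s..\<eta>0} v''\<bar> \<le> integral {s..\<eta>0} (\<lambda>u. \<bar>v'' u\<bar>)"
      using integral_norm_bound_integral[OF int1 int2] by simp
    then have "s * \<bar>integral {s..\<eta>0} v''\<bar> \<le> s * integral {s..\<eta>0} (\<lambda>u. \<bar>v'' u\<bar>)"
      using s by (simp add: mult_left_mono)
    also have "\<dots> = integral {s..\<eta>0} (\<lambda>u. s * \<bar>v'' u\<bar>)"
      using integral_mult[OF int2, of s] by simp
    also have "\<dots> \<le> integral {s..\<eta>0} (\<lambda>u. u * \<bar>v'' u\<bar>)"
      using integrable_on_cmult_left[OF int2, of s] int3
      by (intro integral_le) (auto intro: mult_right_mono)
    also have "\<dots> \<le> integral {0..\<eta>0} (\<lambda>u. u * \<bar>v'' u\<bar>)"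
      using s by (intro integral_subset_le int3 int4) auto
    also have "\<dots> < e/2" using g\<eta> by (simp add: g_def)
    finally have 1: "s * \<bar>integral {s..\<eta>0} v''\<bar> < e/2" .
    have "s * M \<le> s * (M + 1)" using s by simp
    also have "\<dots> < e / (2*(M+1)) * (M + 1)"
      using s M by (intro mult_strict_right_mono) (auto simp: b_def)
    also have "\<dots> = e/2" using M by (simp add: field_simps)
    finally have 2: "s * M < e/2" .
    have "\<bar>s * v' s\<bar> = s * \<bar>v' \<eta>0 - integral {s..\<eta>0} v''\<bar>"
      using s by (simp add: vs abs_mult)
    also have "\<dots> \<le> s * (\<bar>v' \<eta>0\<bar> + \<bar>integral {s..\<eta>0} v''\<bar>)"
      by (intro mult_left_mono abs_triangle_ineq4) (use s in simp)
    finally have "\<bar>s * v' s\<bar> \<le> s * M + s * \<bar>integral {s..\<eta>0} v''\<bar>"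
      by (simp add: M_def distrib_left)
    then show "dist (s * v' s) 0 < e" using 1 2 by (simp add: dist_real_def)
  qed
qed

end



context vset begin

lemma ibp:
  assumes lr: "0 \<le> l" "l < r" "r < T"
    and Wc: "continuous_on {l..r} W" and Wl: "W l = 0" and Wr: "W r = 0"
    and Wd: "\<And>s. l < s \<Longrightarrow> s < r \<Longrightarrow> (W has_real_derivative w s) (at s)"
    and Wb: "\<And>u. l \<le> u \<Longrightarrow> u \<le> r \<Longrightarrow> \<bar>W u\<bar> \<le> c * (u - l)"
  shows "((\<lambda>s. w s * v' s) has_integral - integral {l..r} (\<lambda>s. W s * v'' s)) {l..r}"
    and "\<bar>integral {l..r} (\<lambda>s. W s * v'' s)\<bar> \<le> c * integral {l..r} (\<lambda>s. (s - l) * \<bar>v'' s\<bar>)"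
proof -
  have Gi: "(\<lambda>s. (s - l) * \<bar>v'' s\<bar>) integrable_on {l..r}" using G_int lr by auto
  have cGi: "(\<lambda>s. c * ((s - l) * \<bar>v'' s\<bar>)) integrable_on {l..r}"
    using integrable_on_cmult_left[OF Gi, of c] by simp
  have bnd: "norm (W s * v'' s) \<le> c * ((s - l) * \<bar>v'' s\<bar>)" if "s \<in> {l..r}" for s
  proof -
    have "\<bar>W s\<bar> * \<bar>v'' s\<bar> \<le> (c * (s - l)) * \<bar>v'' s\<bar>"
      using Wb[of s] that by (intro mult_right_mono) auto
    then show ?thesis by (simp add: abs_mult mult.assoc)
  qed
  have neg: "negligible {x \<in> {l..r} - {l<..r}. P x}" for P
    by (rule negligible_subset[of "{l}"]) auto
  have WVi: "(\<lambda>s. W s * v'' s) integrable_on {l..r}"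
  proof -
    have m: "(\<lambda>s. W s * v'' s) \<in> borel_measurable (lebesgue_on {l<..r})"
    proof (rule continuous_imp_measurable_on_sets_lebesgue)
      show "continuous_on {l<..r} (\<lambda>s. W s * v'' s)"
      proof (intro continuous_on_mult)
        show "continuous_on {l<..r} W" by (rule continuous_on_subset[OF Wc]) auto
        show "continuous_on {l<..r} v''" by (rule continuous_on_subset[OF v2_cont]) (use lr in auto)
      qed
    qed simp
    have cGi': "(\<lambda>s. c * ((s - l) * \<bar>v'' s\<bar>)) integrable_on {l<..r}"
      by (rule integrable_spike_set[OF cGi neg]) (rule negligible_subset[of "{}"], auto)
    have "(\<lambda>s. W s * v'' s) integrable_on {l<..r}"
      by (rule measurable_bounded_by_integrable_imp_integrable[OF m cGi']) (use bnd in auto)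
    then show ?thesis
      by (rule integrable_spike_set[OF _ _ neg]) (rule negligible_subset[of "{}"], auto)
  qed
  define F where "F s = W s * v' s" for s
  have Fc: "continuous_on {l..r} F"
    unfolding continuous_on_eq_continuous_within
  proof
    fix s assume s: "s \<in> {l..r}"
    show "continuous (at s within {l..r}) F"
    proof (cases "0 < s")
      case True
      have "continuous (at s within {l..r}) v'"
        using v'_cont_within[of s] True s lr continuous_within_subset[of s "{0..T}" v' "{l..r}"] by auto
      moreover have "continuous (at s within {l..r}) W" using Wc s continuous_on_eq_continuous_within by blast
      ultimately show ?thesis unfolding F_def by (intro continuous_intros)
    next
      case False
      then have s0: "s = 0" "l = 0" using s lr by auto
      have "(F \<longlongrightarrow> 0) (at 0 within {0..r})"
      proof (rule Lim_null_comparison)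
        show "eventually (\<lambda>s. norm (F s) \<le> c * \<bar>s * v' s\<bar>) (at 0 within {0..r})"
          unfolding eventually_at_filter
        proof (rule always_eventually, intro allI impI)
          fix s assume "s \<noteq> 0" "s \<in> {0..r}"
          then have "\<bar>W s\<bar> * \<bar>v' s\<bar> \<le> (c * s) * \<bar>v' s\<bar>"
            using Wb[of s] s0 by (intro mult_right_mono) auto
          then show "norm (F s) \<le> c * \<bar>s * v' s\<bar>" using \<open>s \<in> {0..r}\<close>
            by (simp add: F_def abs_mult mult.assoc)
        qed
        have "((\<lambda>s. s * v' s) \<longlongrightarrow> 0) (at 0 within {0..r})"
          using sv'_lim at_within_Icc_at_right[of 0 r] lr s0 by simp
        from tendsto_mult[OF tendsto_const tendsto_rabs_zero[OF this], of c]
        show "((\<lambda>s. c * \<bar>s * v' s\<bar>) \<longlongrightarrow> 0) (at 0 within {0..r})" by simp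
      qed
      moreover have "F 0 = 0" using Wl s0 by (simp add: F_def)
      ultimately show ?thesis using s0 by (simp add: continuous_within)
    qed
  qed
  have Fd: "(F has_vector_derivative (w s * v' s + W s * v'' s)) (at s)" if "s \<in> {l<..<r}" for s
  proof -
    have "(F has_real_derivative (w s * v' s + W s * v'' s)) (at s)"
    proof -
      have "((\<lambda>x. W x * v' x) has_real_derivative w s * v' s + v'' s * W s) (at s)"
        using DERIV_mult[OF Wd[of s] v2_at[of s]] that lr by auto
      then show ?thesis unfolding F_def by (simp add: mult.commute[of "v'' s" "W s"])
    qed
    then show ?thesis by (simp add: has_real_derivative_iff_has_vector_derivative)
  qed
  have "((\<lambda>s. w s * v' s + W s * v'' s) has_integral (F r - F l)) {l..r}"
    by (rule fundamental_theorem_of_calculus_interior) (use lr Fc Fd in auto)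
  then have "((\<lambda>s. w s * v' s + W s * v'' s) has_integral 0) {l..r}" using Wl Wr by (simp add: F_def)
  from has_integral_diff[OF this integrable_integral[OF WVi]]
  show "((\<lambda>s. w s * v' s) has_integral - integral {l..r} (\<lambda>s. W s * v'' s)) {l..r}" by simp
  have "norm (integral {l..r} (\<lambda>s. W s * v'' s)) \<le> integral {l..r} (\<lambda>s. c * ((s - l) * \<bar>v'' s\<bar>))"
    by (rule integral_norm_bound_integral[OF WVi cGi bnd])
  then show "\<bar>integral {l..r} (\<lambda>s. W s * v'' s)\<bar> \<le> c * integral {l..r} (\<lambda>s. (s - l) * \<bar>v'' s\<bar>)"
    unfolding integral_mult[OF Gi, of c, symmetric] real_norm_def .
qed

end



context
  fixes t :: "nat \<Rightarrow> real" and N :: nat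
  assumes t_incr: "\<And>n. 1 \<le> n \<Longrightarrow> n \<le> N \<Longrightarrow> t (n - 1) < t n"
begin

lemma t_mono:
  fixes i k :: nat
  shows "i \<le> k \<Longrightarrow> k \<le> N \<Longrightarrow> t i \<le> t k"
proof (induction k)
  case 0 then show ?case by simp
next
  case (Suc k)
  show ?case
  proof (cases "i = Suc k")
    case False
    then have "t i \<le> t k" using Suc by simp
    also have "t k < t (Suc k)" using t_incr[of "Suc k"] Suc by simp
    finally show ?thesis by simp
  qed simp
qed

end

lemma tmid_between:
  assumes "1 \<le> n" "t (n - 1) < (t n :: real)"
  shows "t (n - 1) < tmid t n" "tmid t n < t n"
  using assms by (auto simp: tmid_def tau_def field_simps)

context
  fixes t :: "nat \<Rightarrow> real" and N :: nat
  assumes t_incr: "\<And>n. 1 \<le> n \<Longrightarrow> n \<le> N \<Longrightarrow> t (n - 1) < t n"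
begin

lemma tmid_step:
  assumes "1 \<le> k" "k \<le> N"
  shows "tmid t (k - 1) < tmid t k"
proof (cases "k = 1")
  case True
  then show ?thesis using t_incr[of 1] assms by (simp add: tmid_def tau_def)
next
  case False
  then have "tmid t (k - 1) < t (k - 1)" using tmid_between(2)[of "k-1" t] t_incr[of "k-1"] assms by simp
  also have "t (k - 1) < tmid t k" using tmid_between(1)[of k t] t_incr[of k] assms by simp
  finally show ?thesis .
qed

lemma tmid_mono:
  fixes i k :: nat
  shows "i \<le> k \<Longrightarrow> k \<le> N \<Longrightarrow> tmid t i \<le> tmid t k"
proof (induction k)
  case 0 then show ?case by simp
next
  case (Suc k)
  show ?case
  proof (cases "i = Suc k")
    case False
    then have "tmid t i \<le> tmid t k" using Suc by simp
    also have "tmid t k < tmid t (Suc k)" using tmid_step[of "Suc k"] Suc by simp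
    finally show ?thesis by simp
  qed simp
qed

end

lemma tmid_tauh:
  assumes "1 \<le> k"
  shows "tmid t k - tmid t (k - 1) = tauh t k"
proof (cases "k = 1")
  case True then show ?thesis by (simp add: tmid_def tauh_def tau_def)
next
  case False
  define m where "m = k - 2"
  have "k = Suc (Suc m)" using assms False by (simp add: m_def)
  then show ?thesis by (simp add: tmid_def tauh_def tau_def field_simps)
qed

lemma tauh_mono:
  assumes t_incr: "\<And>n. 1 \<le> n \<Longrightarrow> n \<le> N \<Longrightarrow> t (n - 1) < (t n :: real)"
    and tau_mono: "\<And>n. 2 \<le> n \<Longrightarrow> n \<le> N \<Longrightarrow> tau t (n - 1) \<le> tau t n"
    and "1 \<le> k" "k + 1 \<le> N"
  shows "tauh t k \<le> tauh t (k + 1)"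
proof (cases "k = 1")
  case True
  then show ?thesis using t_incr[of 2] assms by (simp add: tauh_def tau_def numeral_2_eq_2)
next
  case False
  then have "2 \<le> k" using assms by simp
  then have a: "tau t (k - 1) \<le> tau t k" using tau_mono[of k] assms by simp
  have b: "tau t k \<le> tau t (k + 1)" using tau_mono[of "k+1"] assms by simp
  have "tauh t k = (tau t k + tau t (k - 1)) / 2" "tauh t (k+1) = (tau t (k+1) + tau t k) / 2"
    using False assms by (auto simp: tauh_def)
  moreover have "(tau t k + tau t (k - 1)) / 2 \<le> (tau t (k+1) + tau t k) / 2"
    using a b by (intro divide_right_mono add_mono) auto
  ultimately show ?thesis by simp
qed



theorem mainTheorem6:
  fixes T \<alpha> :: real and N :: nat and t :: "nat \<Rightarrow> real"
    and v v' v'' :: "real \<Rightarrow> real"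
  assumes T_pos: "0 < T"
    and alpha: "0 < \<alpha>" "\<alpha> < 1"
    and N_pos: "1 \<le> N"
    and t0: "t 0 = 0" and tN: "t N = T"
    and t_incr: "\<And>n. 1 \<le> n \<Longrightarrow> n \<le> N \<Longrightarrow> t (n - 1) < t n"
    and tau_mono: "\<And>n. 2 \<le> n \<Longrightarrow> n \<le> N \<Longrightarrow> tau t (n - 1) \<le> tau t n"
    and v_cont: "continuous_on {0..T} v"
    and v1: "\<And>s. s \<in> {0<..T} \<Longrightarrow> (v has_real_derivative v' s) (at s within {0..T})"
    and v2: "\<And>s. s \<in> {0<..T} \<Longrightarrow> (v' has_real_derivative v'' s) (at s within {0..T})"
    and v2_cont: "continuous_on {0<..T} v''"
    and v2_int: "(\<lambda>s. s * \<bar>v'' s\<bar>) integrable_on {0..T}"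
  shows "\<forall>j. 1 \<le> j \<and> j \<le> N \<longrightarrow>
    \<bar>Rerr t \<alpha> v j\<bar> \<le>
      (\<Sum>k=1..j-1. (acoef t \<alpha> j (k + 1) - acoef t \<alpha> j k) *
          integral {tmid t (k - 1)..tmid t k} (\<lambda>s. (s - tmid t (k - 1)) * \<bar>v'' s\<bar>))
      + acoef t \<alpha> j j *
          integral {tmid t (j - 1)..tmid t j} (\<lambda>s. (s - tmid t (j - 1)) * \<bar>v'' s\<bar>)"
proof (intro allI impI)
  fix j assume j: "1 \<le> j \<and> j \<le> N"
  interpret vset T v v' v'' using T_pos v_cont v1 v2 v2_cont v2_int by unfold_locales
  define x where "x = tmid t j"
  define K where "K s = omega (1-\<alpha>) (x - s)" for s
  define l where "l k = tmid t (k-1)" for k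
  define r where "r k = tmid t k" for k
  define a where "a k = acoef t \<alpha> j k" for k
  define G where "G k = integral {l k..r k} (\<lambda>s. (s - l k) * \<bar>v'' s\<bar>)" for k
  define c where "c k = (if k < j then a (k+1) - a k else a k)" for k
  define W where "W k u = PP \<alpha> x u - PP \<alpha> x (l k) - a k * (u - l k)" for k u
  define I where "I k = integral {l k..r k} (\<lambda>s. W k s * v'' s)" for k
  have tmono: "i \<le> k \<Longrightarrow> k \<le> N \<Longrightarrow> t i \<le> t k" for i k
    using t_mono[where t=t and N=N, OF t_incr] by blast
  have mmono: "i \<le> k \<Longrightarrow> k \<le> N \<Longrightarrow> tmid t i \<le> tmid t k" for i k
    using tmid_mono[where t=t and N=N, OF t_incr] by blast
  have mstep: "1 \<le> k \<Longrightarrow> k \<le> N \<Longrightarrow> tmid t (k - 1) < tmid t k" for k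
    using tmid_step[where t=t and N=N, OF t_incr] by blast
  have m0: "tmid t 0 = 0" using t0 by (simp add: tmid_def)
  have xT: "x < T"
  proof -
    have "x < t j" unfolding x_def using tmid_between(2)[of j t] t_incr[of j] j by simp
    also have "t j \<le> T" using tmono[of j N] j tN by simp
    finally show ?thesis .
  qed
  have lr: "0 \<le> l k" "l k < r k" "r k \<le> x" if k: "1 \<le> k" "k \<le> j" for k
  proof -
    show "0 \<le> l k" using mmono[of 0 "k-1"] k j m0 by (simp add: l_def)
    show "l k < r k" using mstep[of k] k j by (simp add: l_def r_def)
    show "r k \<le> x" using mmono[of k j] k j by (simp add: r_def x_def)
  qed
  have a_eq: "a k = (PP \<alpha> x (r k) - PP \<alpha> x (l k)) / (r k - l k)" if k: "1 \<le> k" "k \<le> j" for k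
  proof -
    have "integral {l k..r k} (\<lambda>s. omega (1-\<alpha>) (x - s)) = PP \<alpha> x (r k) - PP \<alpha> x (l k)"
      using lr[OF k] alpha by (intro integral_unique PP_integral) auto
    moreover have "tauh t k = r k - l k" using tmid_tauh[of k t] k by (simp add: l_def r_def)
    ultimately show ?thesis by (simp add: a_def acoef_def K_def x_def l_def r_def)
  qed
  have cb: "a k - K (l k) \<le> c k" if k: "1 \<le> k" "k \<le> j" for k
  proof (cases "k < j")
    case True
    have k1: "1 \<le> k + 1" "k + 1 \<le> j" using True by auto
    have lk1: "l (k+1) = r k" by (simp add: l_def r_def)
    have h: "r k - l k \<le> r (k+1) - r k"
      using tauh_mono[where t=t and N=N, OF t_incr tau_mono, of k] tmid_tauh[of k t] tmid_tauh[of "k+1" t] k True j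
      by (simp add: l_def r_def)
    have "2 * ((PP \<alpha> x (r k) - PP \<alpha> x (l k)) / (r k - l k)) - omega (1-\<alpha>) (x - l k)
        \<le> (PP \<alpha> x (r k + (r (k+1) - r k)) - PP \<alpha> x (r k)) / (r (k+1) - r k)"
      using lr[OF k] lr[OF k1] lk1 alpha h by (intro I3) auto
    then have "2 * a k - K (l k) \<le> a (k+1)"
      using a_eq[OF k] a_eq[OF k1] lk1 by (simp add: K_def)
    then show ?thesis using True by (simp add: c_def)
  next
    case False
    have "0 < K (l k)" unfolding K_def using lr[OF k] alpha by (intro K_pos) auto
    then show ?thesis using False by (simp add: c_def)
  qed
  have per: "((\<lambda>s. K s * v' s) has_integral (- I k + a k * (v (r k) - v (l k)))) {l k..r k}
     \<and> \<bar>I k\<bar> \<le> c k * G k" if k: "1 \<le> k" "k \<le> j" for k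
  proof -
    note lrk = lr[OF k]
    have Wc: "continuous_on {l k..r k} (W k)" unfolding W_def
      using lrk alpha by (intro continuous_intros PP_cont) auto
    have Wl: "W k (l k) = 0" by (simp add: W_def)
    have Wr: "W k (r k) = 0" using a_eq[OF k] lrk by (simp add: W_def)
    have Wd: "(W k has_real_derivative (K s - a k)) (at s)" if "l k < s" "s < r k" for s
      unfolding W_def K_def using that lrk alpha
      by (auto intro!: derivative_eq_intros PP_deriv)
    have Wb: "\<bar>W k u\<bar> \<le> c k * (u - l k)" if "l k \<le> u" "u \<le> r k" for u
      unfolding W_def using lrk alpha that cb[OF k] a_eq[OF k]
      by (intro W_bound) (auto simp: K_def)
    note ib = ibp[OF lrk(1,2) _ Wc Wl Wr Wd Wb]
    have rT: "r k < T" using lrk xT by simp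
    have i1: "((\<lambda>s. (K s - a k) * v' s) has_integral - I k) {l k..r k}"
      using ib(1)[OF rT] by (simp add: I_def)
    have i2: "((\<lambda>s. a k * v' s) has_integral a k * (v (r k) - v (l k))) {l k..r k}"
      using v_ftc[of "l k" "r k"] lrk rT by (intro has_integral_mult_right) auto
    have "((\<lambda>s. (K s - a k) * v' s + a k * v' s) has_integral (- I k + a k * (v (r k) - v (l k)))) {l k..r k}"
      by (rule has_integral_add[OF i1 i2])
    moreover have "(\<lambda>s. (K s - a k) * v' s + a k * v' s) = (\<lambda>s. K s * v' s)"
      by (rule ext) (simp add: algebra_simps)
    ultimately show ?thesis using ib(2)[OF rT] by (simp add: I_def G_def)
  qed
  define J where "J k = - I k + a k * (v (r k) - v (l k))" for k
  have comb: "m \<le> j \<Longrightarrow> ((\<lambda>s. K s * v' s) has_integral (\<Sum>k=1..m. J k)) {0..tmid t m}" for m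
  proof (induction m)
    case 0
    then show ?case using m0 has_integral_refl(2)[of "\<lambda>s. K s * v' s" "0::real"] by simp
  next
    case (Suc m)
    have k: "1 \<le> Suc m" "Suc m \<le> j" using Suc by auto
    have "((\<lambda>s. K s * v' s) has_integral (\<Sum>k=1..m. J k) + J (Suc m)) {0..tmid t (Suc m)}"
    proof (rule has_integral_combine)
      show "0 \<le> tmid t m" using mmono[of 0 m] m0 Suc j by simp
      show "tmid t m \<le> tmid t (Suc m)" using lr(2)[OF k] by (simp add: l_def r_def)
      show "((\<lambda>s. K s * v' s) has_integral (\<Sum>k=1..m. J k)) {0..tmid t m}" using Suc by simp
      show "((\<lambda>s. K s * v' s) has_integral J (Suc m)) {tmid t m..tmid t (Suc m)}"
        using conjunct1[OF per[OF k]] by (simp add: J_def l_def r_def)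
    qed
    then show ?case by simp
  qed
  have cap: "caputo \<alpha> v x = (\<Sum>k=1..j. J k)"
  proof -
    have "((\<lambda>s. omega (1 - \<alpha>) (x - s) * deriv v s) has_integral (\<Sum>k=1..j. J k)) {0..x}"
    proof (rule has_integral_spike_finite[of "{0, x}"])
      show "((\<lambda>s. K s * v' s) has_integral (\<Sum>k=1..j. J k)) {0..x}"
        using comb[of j] by (simp add: x_def)
      fix s assume s: "s \<in> {0..x} - {0, x}"
      then have "deriv v s = v' s" using xT by (intro DERIV_imp_deriv v1_at) auto
      then show "omega (1 - \<alpha>) (x - s) * deriv v s = K s * v' s" by (simp add: K_def)
    qed simp
    then show ?thesis unfolding caputo_def by (rule integral_unique)
  qed
  have R: "Rerr t \<alpha> v j = - (\<Sum>k=1..j. I k)"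
    unfolding Rerr_def cap[unfolded x_def]
    by (simp add: J_def sum.distrib sum_negf sum_subtractf a_def l_def r_def)
  have "\<bar>Rerr t \<alpha> v j\<bar> \<le> (\<Sum>k=1..j. \<bar>I k\<bar>)" unfolding R by (simp add: sum_abs)
  also have "\<dots> \<le> (\<Sum>k=1..j. c k * G k)"
    using per by (intro sum_mono) auto
  also have "\<dots> = (\<Sum>k=1..j-1. c k * G k) + c j * G j"
  proof -
    obtain m where m: "j = Suc m" using j by (cases j) auto
    show ?thesis unfolding m by (simp add: sum.cl_ivl_Suc)
  qed
  also have "\<dots> = (\<Sum>k=1..j-1. (a (k+1) - a k) * G k) + a j * G j"
  proof -
    have "(\<Sum>k=1..j-1. c k * G k) = (\<Sum>k=1..j-1. (a (k+1) - a k) * G k)"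
      by (rule sum.cong) (use j in \<open>auto simp: c_def\<close>)
    then show ?thesis by (simp add: c_def)
  qed
  finally show "\<bar>Rerr t \<alpha> v j\<bar> \<le>
      (\<Sum>k=1..j-1. (acoef t \<alpha> j (k + 1) - acoef t \<alpha> j k) *
          integral {tmid t (k - 1)..tmid t k} (\<lambda>s. (s - tmid t (k - 1)) * \<bar>v'' s\<bar>))
      + acoef t \<alpha> j j *
          integral {tmid t (j - 1)..tmid t j} (\<lambda>s. (s - tmid t (j - 1)) * \<bar>v'' s\<bar>)"
    by (simp add: a_def G_def l_def r_def)
qed


end
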